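(* Let $f\colon X\to Y$ be a perfect map between metrizable spaces, $d$ a compatible metric on $X$, $(M,\varrho)$ a complete metric space, $m,n\ge1$, $g_0\in C(X,M)$ and $\varepsilon\colon X\to(0,1/64]$ continuous. Equip $C(X,M)$ with the compact-open topology and define $\Phi_\varepsilon(y)=\mathcal{K}(m,n,y)\cap B_\varrho(g_0,\varepsilon)$ for $y\in Y$. If $y_0\in Y$ and $K\subset\Phi_\varepsilon(y_0)$ is compact, then there is a neighborhood $V(y_0)$ of $y_0$ in $Y$ such that $K\subset\Phi_\varepsilon(y)$ for every $y\in V(y_0)$.
   Context: $B_\varrho(g_0,\varepsilon)=\{g\in C(X,M):\varrho(g(x),g_0(x))<\varepsilon(x)\ \forall x\in X\}$. For $A\subset X$, $B(A,\delta)=\{x:d(x,A)<\delta\}$. $C(x,g|f^{-1}(y))$ is the component of $g^{-1}(g(x))\cap f^{-1}(y)$ containing $x$. $\mathcal{K}(m,n,y)$ is the set of $g\in C(X,M)$ such that for every subcontinuum $L\subset f^{-1}(y)$ with $\operatorname{diam}g(L)\ge1/n$ there is $x\in L$ with $C(x,g|f^{-1}(y))\subset B(L,1/m)$. *)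

theory Defs
  imports "HOL-Analysis.Analysis"
begin

definition Cmaps :: "('a::topological_space \<Rightarrow> 'b::topological_space) set" where
  "Cmaps = {g. continuous_on UNIV g}"

definition compact_open_topology ::
  "('a::topological_space \<Rightarrow> 'b::topological_space) topology" where
  "compact_open_topology = topology_generated_by
     {{g \<in> Cmaps. g ` C \<subseteq> U} | C U. compact C \<and> open U}"

definition perfect_map :: "('a::topological_space \<Rightarrow> 'b::topological_space) \<Rightarrow> bool" where
  "perfect_map f \<longleftrightarrow> continuous_on UNIV f \<and> (\<forall>A. closed A \<longrightarrow> closed (f ` A))
      \<and> (\<forall>y. compact (f -` {y}))"

definition Bfun :: "('a::topological_space \<Rightarrow> 'b::metric_space) \<Rightarrow> ('a \<Rightarrow> real) \<Rightarrow> ('a \<Rightarrow> 'b) set" where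
  "Bfun g0 eps = {g \<in> Cmaps. \<forall>x. dist (g x) (g0 x) < eps x}"

definition Bset :: "'a::metric_space set \<Rightarrow> real \<Rightarrow> 'a set" where
  "Bset A \<delta> = {x. infdist x A < \<delta>}"

definition Ccomp :: "'a::metric_space \<Rightarrow> ('a \<Rightarrow> 'c) \<Rightarrow> ('a \<Rightarrow> 'b) \<Rightarrow> 'b \<Rightarrow> 'a set" where
  "Ccomp x g f y = connected_component_set (g -` {g x} \<inter> f -` {y}) x"

definition continuum :: "'a::topological_space set \<Rightarrow> bool" where
  "continuum L \<longleftrightarrow> L \<noteq> {} \<and> compact L \<and> connected L"

definition Kset :: "('a::metric_space \<Rightarrow> 'b) \<Rightarrow> nat \<Rightarrow> nat \<Rightarrow> 'b \<Rightarrow> ('a \<Rightarrow> 'c::metric_space) set" where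
  "Kset f m n y = {g \<in> Cmaps. \<forall>L. continuum L \<and> L \<subseteq> f -` {y} \<and> diameter (g ` L) \<ge> 1 / real n
      \<longrightarrow> (\<exists>x\<in>L. Ccomp x g f y \<subseteq> Bset L (1 / real m))}"

end

theory Submission
  imports Defs
begin

lemma perfect_preimage_compact:
  fixes f :: "'a::metric_space \<Rightarrow> 'b::metric_space"
  assumes "perfect_map f" "y \<longlonglongrightarrow> y0"
  shows "compact (f -` insert y0 (range y))"
proof -
  have pm: "proper_map euclidean euclidean f"
    using assms(1) unfolding perfect_map_def proper_map_def closed_map_def
    by (auto simp: vimage_def)
  have "compactin euclidean (insert y0 (range y))"
    by (rule compactin_sequence_with_limit) (use assms(2) in auto)
  from compactin_proper_map_preimage[OF pm this] show ?thesis by (simp add: vimage_def)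
qed

lemma subseq_choice:
  fixes P :: "nat \<Rightarrow> nat \<Rightarrow> bool"
  assumes "\<And>j N. \<exists>k\<ge>N. P j k"
  shows "\<exists>r. strict_mono r \<and> (\<forall>j. P j (r j))"
proof -
  have "\<exists>f. \<forall>n. P n (f n) \<and> f n < f (Suc n)"
  proof (rule dependent_nat_choice)
    show "\<exists>x. P 0 x" using assms by blast
    fix x n assume "P n x"
    obtain k where "k \<ge> Suc x" "P (Suc n) k" using assms by blast
    then show "\<exists>y. P (Suc n) y \<and> x < y" by auto
  qed
  then obtain f where "\<forall>n. P n (f n) \<and> f n < f (Suc n)" by blast
  then show ?thesis by (auto simp: strict_mono_Suc_iff)
qed

lemma cpt_subseq:
  fixes Z :: "'a::metric_space set" and w :: "nat \<Rightarrow> 'a"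
  assumes "compact Z" "\<And>k. w k \<in> Z"
  shows "\<exists>r l. strict_mono r \<and> l \<in> Z \<and> (w \<circ> r) \<longlonglongrightarrow> l"
proof -
  have "\<forall>n. w n \<in> Z" using assms(2) by blast
  from seq_compactE[OF compact_imp_seq_compact[OF assms(1)] this]
  obtain l r where "l \<in> Z" "strict_mono (r :: nat \<Rightarrow> nat)" "(w \<circ> r) \<longlonglongrightarrow> l" by blast
  then show ?thesis by blast
qed

lemma pick_close:
  fixes l :: "'a::metric_space"
  assumes "(\<lambda>k. infdist l (A k)) \<longlonglongrightarrow> 0" "\<And>k. A k \<noteq> {}"
  shows "\<exists>w. (\<forall>k. w k \<in> A k) \<and> w \<longlonglongrightarrow> l"
proof -
  have "\<forall>k. \<exists>a\<in>A k. dist l a < infdist l (A k) + 1 / real (Suc k)"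
  proof
    fix k
    have "infdist l (A k) < infdist l (A k) + 1 / real (Suc k)" by simp
    then show "\<exists>a\<in>A k. dist l a < infdist l (A k) + 1 / real (Suc k)"
      unfolding infdist_notempty[OF assms(2)] 
      by (subst (asm) cINF_less_iff) (use assms(2) in auto)
  qed
  then obtain w where w: "\<And>k. w k \<in> A k" "\<And>k. dist l (w k) < infdist l (A k) + 1 / real (Suc k)"
    by metis
  have "(\<lambda>k. infdist l (A k) + 1 / real (Suc k)) \<longlonglongrightarrow> 0 + 0"
    by (intro tendsto_add assms(1) LIMSEQ_inverse_real_of_nat[unfolded inverse_eq_divide])
  then have lim: "(\<lambda>k. infdist l (A k) + 1 / real (Suc k)) \<longlonglongrightarrow> 0" by simp
  have "(\<lambda>k. dist (w k) l) \<longlonglongrightarrow> 0"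
  proof (rule tendsto_sandwich[where f="\<lambda>_. 0" and h="\<lambda>k. infdist l (A k) + 1 / real (Suc k)"])
    show "\<forall>\<^sub>F k in sequentially. 0 \<le> dist (w k) l" by simp
    show "\<forall>\<^sub>F k in sequentially. dist (w k) l \<le> infdist l (A k) + 1 / real (Suc k)"
      using w(2) by (simp add: dist_commute less_imp_le)
  qed (use lim in auto)
  then have "w \<longlonglongrightarrow> l" using tendsto_dist_iff by blast
  with w show ?thesis by blast
qed

definition KL :: "'a::metric_space set \<Rightarrow> (nat \<Rightarrow> 'a set) \<Rightarrow> 'a set \<Rightarrow> bool" where
  "KL Z A L \<longleftrightarrow> L \<subseteq> Z \<and> (\<forall>l\<in>L. (\<lambda>k. infdist l (A k)) \<longlonglongrightarrow> 0) \<and>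
     (\<forall>s w z. strict_mono s \<and> (\<forall>k. w k \<in> A (s k)) \<and> w \<longlonglongrightarrow> z \<longrightarrow> z \<in> L)"

lemma KL_D1: "KL Z A L \<Longrightarrow> L \<subseteq> Z" unfolding KL_def by (elim conjE) assumption
lemma KL_D2:
  assumes "KL Z A L" "l \<in> L" shows "(\<lambda>k. infdist l (A k)) \<longlonglongrightarrow> 0"
proof -
  have "\<forall>l\<in>L. (\<lambda>k. infdist l (A k)) \<longlonglongrightarrow> 0" using assms(1) unfolding KL_def by (elim conjE) assumption
  then show ?thesis using assms(2) by (rule bspec)
qed
lemma KL_D3:
  assumes "KL Z A L" "strict_mono s" "\<And>k. w k \<in> A (s k)" "w \<longlonglongrightarrow> z"
  shows "z \<in> L"
proof -
  have "\<forall>s w z. strict_mono s \<and> (\<forall>k. w k \<in> A (s k)) \<and> w \<longlonglongrightarrow> z \<longrightarrow> z \<in> L"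
    using assms(1) unfolding KL_def by (elim conjE) assumption
  then have "strict_mono s \<and> (\<forall>k. w k \<in> A (s k)) \<and> w \<longlonglongrightarrow> z \<longrightarrow> z \<in> L"
    by (elim allE)
  then show ?thesis using assms(2-4) by simp
qed
lemma KL_I:
  assumes "L \<subseteq> Z" "\<And>l. l \<in> L \<Longrightarrow> (\<lambda>k. infdist l (A k)) \<longlonglongrightarrow> 0"
    "\<And>s w z. strict_mono s \<Longrightarrow> (\<And>k. w k \<in> A (s k)) \<Longrightarrow> w \<longlonglongrightarrow> z \<Longrightarrow> z \<in> L"
  shows "KL Z A L"
proof -
  have "\<forall>s w z. strict_mono s \<and> (\<forall>k. w k \<in> A (s k)) \<and> w \<longlonglongrightarrow> z \<longrightarrow> z \<in> L"
  proof (intro allI impI, elim conjE)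
    fix s w z assume "strict_mono s" "\<forall>k. w k \<in> A (s k)" "w \<longlonglongrightarrow> z"
    then show "z \<in> L" by (intro assms(3)[of s w z]) auto
  qed
  moreover have "\<forall>l\<in>L. (\<lambda>k. infdist l (A k)) \<longlonglongrightarrow> 0" using assms(2) by auto
  ultimately show ?thesis using assms(1) unfolding KL_def by (intro conjI)
qed

lemma KL_subseq:
  assumes KL: "KL Z A L" and r: "strict_mono r"
  shows "KL Z (\<lambda>k. A (r k)) L"
proof (rule KL_I)
  show "L \<subseteq> Z" using KL_D1[OF KL] .
  fix l assume "l \<in> L"
  from LIMSEQ_subseq_LIMSEQ[OF KL_D2[OF KL this] r]
  show "(\<lambda>k. infdist l (A (r k))) \<longlonglongrightarrow> 0" by (simp add: o_def)
next
  fix s w z assume s: "strict_mono s" and w: "\<And>k. w k \<in> A (r (s k))" and z: "w \<longlonglongrightarrow> z"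
  have "strict_mono (r \<circ> s)" using r s by (rule strict_mono_o)
  moreover have "\<And>k. w k \<in> A ((r \<circ> s) k)" using w by simp
  ultimately show "z \<in> L" by (rule KL_D3[OF KL _ _ z])
qed

lemma KL_closed:
  assumes "KL Z A L" "\<And>k. A k \<noteq> {}"
  shows "closed L"
  unfolding closed_sequential_limits
proof (intro allI impI, elim conjE)
  fix x z assume x: "\<forall>j. x j \<in> L" and xz: "x \<longlonglongrightarrow> z"
  have a: "\<And>l. l \<in> L \<Longrightarrow> (\<lambda>k. infdist l (A k)) \<longlonglongrightarrow> 0" using KL_D2[OF assms(1)] by blast
  have "(\<lambda>k. infdist z (A k)) \<longlonglongrightarrow> 0"
    unfolding lim_sequentially
  proof (intro allI impI)
    fix e :: real assume "e > 0"
    then have e2: "e/2 > 0" by simp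
    obtain j where j: "dist (x j) z < e/2" using xz e2 unfolding lim_sequentially
      by blast
    obtain N where N: "\<forall>k\<ge>N. dist (infdist (x j) (A k)) 0 < e/2"
      using a[of "x j"] x e2 unfolding lim_sequentially by blast
    show "\<exists>N. \<forall>k\<ge>N. dist (infdist z (A k)) 0 < e"
    proof (intro exI allI impI)
      fix k assume "k \<ge> N"
      have t: "infdist z (A k) \<le> infdist (x j) (A k) + dist z (x j)" by (rule infdist_triangle)
      have "dist (infdist (x j) (A k)) 0 < e/2" using N \<open>k\<ge>N\<close> by blast
      then have "infdist (x j) (A k) < e/2" by (simp add: dist_real_def)
      moreover have "dist z (x j) < e/2" using j by (simp add: dist_commute)
      ultimately show "dist (infdist z (A k)) 0 < e"
        using t infdist_nonneg[of z "A k"] by (simp add: dist_real_def)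
    qed
  qed
  then obtain w where w: "\<forall>k. w k \<in> A k" "w \<longlonglongrightarrow> z" using pick_close assms(2) by blast
  have sm: "strict_mono (\<lambda>k::nat. k)" by (simp add: strict_mono_def)
  show "z \<in> L" using KL_D3[OF assms(1) sm, of w z] w by simp
qed

lemma infdist_lessE:
  fixes x :: "'a::metric_space"
  assumes "infdist x A < e" "A \<noteq> {}"
  shows "\<exists>a\<in>A. dist x a < e"
  using assms unfolding infdist_notempty[OF assms(2)]
  by (subst (asm) cINF_less_iff) auto

lemma KL_connected:
  fixes Z :: "'a::metric_space set"
  assumes KL: "KL Z A L" and Z: "compact Z" and AZ: "\<And>k. A k \<subseteq> Z" and Ane: "\<And>k. A k \<noteq> {}"
    and Acon: "\<And>k. connected (A k)"
  shows "connected L"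
  unfolding connected_closed
proof (rule notI, elim exE conjE)
  fix P Q assume P: "closed P" and Q: "closed Q" and LPQ: "L \<subseteq> P \<union> Q"
    and dis: "P \<inter> Q \<inter> L = {}" and Pne: "P \<inter> L \<noteq> {}" and Qne: "Q \<inter> L \<noteq> {}"
  have Lc: "closed L" using KL_closed[OF KL Ane] .
  define P' where "P' = P \<inter> L"
  define Q' where "Q' = Q \<inter> L"
  have P'c: "closed P'" "P' \<noteq> {}" using P Lc Pne unfolding P'_def by auto
  have Q'c: "closed Q'" "Q' \<noteq> {}" using Q Lc Qne unfolding Q'_def by auto
  define U where "U = {z. infdist z P' < infdist z Q'}"
  define V where "V = {z. infdist z Q' < infdist z P'}"
  have oU: "open U" unfolding U_def
    by (intro open_Collect_less continuous_on_infdist continuous_on_id)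
  have oV: "open V" unfolding V_def
    by (intro open_Collect_less continuous_on_infdist continuous_on_id)
  have UV: "U \<inter> V = {}" unfolding U_def V_def by auto
  have LUV: "L \<subseteq> U \<union> V"
  proof
    fix z assume "z \<in> L"
    show "z \<in> U \<union> V"
    proof (cases "z \<in> P")
      case True
      then have "z \<in> P'" "z \<notin> Q'" using \<open>z\<in>L\<close> dis unfolding P'_def Q'_def by auto
      then have "infdist z P' = 0" "infdist z Q' > 0"
        using infdist_pos_not_in_closed[OF Q'c] by auto
      then show ?thesis unfolding U_def by auto
    next
      case False
      then have "z \<in> Q'" "z \<notin> P'" using \<open>z\<in>L\<close> LPQ unfolding P'_def Q'_def by auto
      then have "infdist z Q' = 0" "infdist z P' > 0"
        using infdist_pos_not_in_closed[OF P'c] by auto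
      then show ?thesis unfolding V_def by auto
    qed
  qed
  have b: "\<And>s w z. strict_mono s \<Longrightarrow> (\<forall>k. w k \<in> A (s k)) \<Longrightarrow> w \<longlonglongrightarrow> z \<Longrightarrow> z \<in> L"
    using KL_D3[OF KL] by blast
  have a: "\<And>l. l \<in> L \<Longrightarrow> (\<lambda>k. infdist l (A k)) \<longlonglongrightarrow> 0"
    using KL_D2[OF KL] by blast
  have ev1: "\<forall>\<^sub>F k in sequentially. A k \<subseteq> U \<union> V"
  proof (rule ccontr)
    assume "\<not> ?thesis"
    then have inf: "\<And>N. \<exists>k\<ge>N. \<not> A k \<subseteq> U \<union> V"
      unfolding eventually_sequentially by (meson not_le_imp_less order.strict_implies_order)
    have "\<exists>s::nat\<Rightarrow>nat. strict_mono s \<and> (\<forall>j. \<not> A (s j) \<subseteq> U \<union> V)"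
      by (rule subseq_choice[of "\<lambda>j k. \<not> A k \<subseteq> U \<union> V"]) (rule inf)
    then obtain s :: "nat \<Rightarrow> nat" where s: "strict_mono s" "\<And>j. \<not> A (s j) \<subseteq> U \<union> V"
      by blast
    then have "\<forall>j. \<exists>w. w \<in> A (s j) \<and> w \<notin> U \<union> V" by blast
    then obtain w where w: "\<And>j. w j \<in> A (s j)" "\<And>j. w j \<notin> U \<union> V" by metis
    have "\<And>j. w j \<in> Z" using w AZ by blast
    then obtain r l where r: "strict_mono r" "l \<in> Z" "(w \<circ> r) \<longlonglongrightarrow> l"
      using cpt_subseq[OF Z] by blast
    have "strict_mono (s \<circ> r)" using s r strict_mono_o by blast
    moreover have "\<forall>k. (w \<circ> r) k \<in> A ((s \<circ> r) k)" using w by simp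
    ultimately have "l \<in> L" using b r by blast
    then have "l \<in> U \<union> V" using LUV by blast
    then have "\<forall>\<^sub>F j in sequentially. (w \<circ> r) j \<in> U \<union> V"
      using topological_tendstoD[OF r(3)] oU oV by blast
    then show False using w(2) by (auto simp: eventually_sequentially)
  qed
  have near: "\<forall>\<^sub>F k in sequentially. A k \<inter> W \<noteq> {}" if oW: "open W" and pL: "p \<in> L" and pW: "p \<in> W" for W p
  proof -
    obtain e where e: "e > 0" "ball p e \<subseteq> W" using oW pW by (rule openE)
    have "\<forall>\<^sub>F k in sequentially. dist (infdist p (A k)) 0 < e"
      using a[OF pL] e(1) by (simp add: tendsto_iff)
    then show ?thesis
    proof (rule eventually_mono)
      fix k assume "dist (infdist p (A k)) 0 < e"
      then have "infdist p (A k) < e" using infdist_nonneg[of p "A k"] by (simp add: dist_real_def)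
      then obtain q where "q \<in> A k" "dist p q < e" using infdist_lessE Ane by blast
      then show "A k \<inter> W \<noteq> {}" using e(2) by auto
    qed
  qed
  obtain p where p: "p \<in> P'" using P'c by blast
  obtain q where q: "q \<in> Q'" using Q'c by blast
  have pU: "p \<in> U" "p \<in> L"
    using p infdist_pos_not_in_closed[OF Q'c, of p] dis unfolding U_def P'_def Q'_def by auto
  have qV: "q \<in> V" "q \<in> L"
    using q infdist_pos_not_in_closed[OF P'c, of q] dis unfolding V_def P'_def Q'_def by auto
  have "\<forall>\<^sub>F k in sequentially. A k \<subseteq> U \<union> V \<and> A k \<inter> U \<noteq> {} \<and> A k \<inter> V \<noteq> {}"
    using ev1 near[OF oU pU(2) pU(1)] near[OF oV qV(2) qV(1)] by (intro eventually_conj)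
  then obtain N where N: "\<forall>k\<ge>N. A k \<subseteq> U \<union> V \<and> A k \<inter> U \<noteq> {} \<and> A k \<inter> V \<noteq> {}"
    unfolding eventually_sequentially by blast
  then have "A N \<subseteq> U \<union> V" "A N \<inter> U \<noteq> {}" "A N \<inter> V \<noteq> {}" by auto
  then show False using Acon[of N] oU oV UV unfolding connected_def by blast
qed

lemma subsequence_diagonalization_lemma:
  fixes P :: "nat \<Rightarrow> (nat \<Rightarrow> 'a) \<Rightarrow> bool"
  assumes sub: "\<And>i r. \<exists>k. strict_mono (k :: nat \<Rightarrow> nat) \<and> P i (r \<circ> k)"
      and P_P:  "\<And>i r::nat \<Rightarrow> 'a. \<And>k1 k2 N.
                   \<lbrakk>P i (r \<circ> k1); \<And>j. N \<le> j \<Longrightarrow> \<exists>j'. j \<le> j' \<and> k2 j = k1 j'\<rbrakk> \<Longrightarrow> P i (r \<circ> k2)"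
   obtains k where "strict_mono (k :: nat \<Rightarrow> nat)" "\<And>i. P i (r \<circ> k)"
proof -
  obtain kk where "\<And>i r. strict_mono (kk i r :: nat \<Rightarrow> nat) \<and> P i (r \<circ> (kk i r))"
    using sub by metis
  then have sub_kk: "\<And>i r. strict_mono (kk i r)" and P_kk: "\<And>i r. P i (r \<circ> (kk i r))"
    by auto
  define rr where "rr \<equiv> rec_nat (kk 0 r) (\<lambda>n x. x \<circ> kk (Suc n) (r \<circ> x))"
  then have [simp]: "rr 0 = kk 0 r" "\<And>n. rr(Suc n) = rr n \<circ> kk (Suc n) (r \<circ> rr n)"
    by auto
  show thesis
  proof
    have sub_rr: "strict_mono (rr i)" for i
      using sub_kk  by (induction i) (auto simp: strict_mono_def o_def)
    have P_rr: "P i (r \<circ> rr i)" for i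
      using P_kk  by (induction i) (auto simp: o_def)
    have "i \<le> i+d \<Longrightarrow> rr i n \<le> rr (i+d) n" for d i n
    proof (induction d)
      case 0 then show ?case
        by simp
    next
      case (Suc d) then show ?case
        using seq_suble [OF sub_kk] strict_mono_less_eq [OF sub_rr]
        by (simp add: order_subst1)
    qed
    then have "\<And>i j n. i \<le> j \<Longrightarrow> rr i n \<le> rr j n"
      by (metis le_iff_add)
    show "strict_mono (\<lambda>n. rr n n)"
      unfolding strict_mono_Suc_iff
      by (simp add: Suc_le_lessD strict_monoD strict_mono_imp_increasing sub_kk sub_rr)
    have "\<exists>j. i \<le> j \<and> rr (n+d) i = rr n j" for d n i
    proof (induction d arbitrary: i)
      case (Suc d)
      then show ?case
        using seq_suble [OF sub_kk] by simp (meson order_trans)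
    qed auto
    then have "\<And>m n i. n \<le> m \<Longrightarrow> \<exists>j. i \<le> j \<and> rr m i = rr n j"
      by (metis le_iff_add)
    then show "P i (r \<circ> (\<lambda>n. rr n n))" for i
      by (meson P_rr P_P)
  qed
qed

lemma function_convergent_subsequence:
  fixes f :: "[nat,'a] \<Rightarrow> 'b::{real_normed_vector,heine_borel}"
  assumes "countable S" and M: "\<And>n::nat. \<And>x. x \<in> S \<Longrightarrow> norm(f n x) \<le> M"
   obtains k where "strict_mono (k::nat\<Rightarrow>nat)" "\<And>x. x \<in> S \<Longrightarrow> \<exists>l. (\<lambda>n. f (k n) x) \<longlonglongrightarrow> l"
proof (cases "S = {}")
  case True
  then show ?thesis
    using strict_mono_id that by fastforce
next
  case False
  with \<open>countable S\<close> obtain \<sigma> :: "nat \<Rightarrow> 'a" where \<sigma>: "S = range \<sigma>"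
    using uncountable_def by blast
  obtain k where "strict_mono k" and k: "\<And>i. \<exists>l. (\<lambda>n. (f \<circ> k) n (\<sigma> i)) \<longlonglongrightarrow> l"
  proof (rule subsequence_diagonalization_lemma
      [of "\<lambda>i r. \<exists>l. ((\<lambda>n. (f \<circ> r) n (\<sigma> i)) \<longlongrightarrow> l) sequentially" id])
    show "\<exists>k::nat\<Rightarrow>nat. strict_mono k \<and> (\<exists>l. (\<lambda>n. (f \<circ> (r \<circ> k)) n (\<sigma> i)) \<longlonglongrightarrow> l)" for i r
    proof -
      have "f (r n) (\<sigma> i) \<in> cball 0 M" for n
        by (simp add: \<sigma> M)
      then show ?thesis
        using compact_def [of "cball (0::'b) M"] by (force simp: o_def)
    qed
    show "\<exists>l. (\<lambda>n. (f \<circ> (r \<circ> k2)) n (\<sigma> i)) \<longlonglongrightarrow> l" 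
      if "\<exists>l. (\<lambda>n. (f \<circ> (r \<circ> k1)) n (\<sigma> i)) \<longlonglongrightarrow> l" "\<And>j. N \<le> j \<Longrightarrow> \<exists>j'\<ge>j. k2 j = k1 j'"
      for i N and r k1 k2 :: "nat\<Rightarrow>nat"
      using that
      by (simp add: lim_sequentially) (metis (no_types, opaque_lifting) le_cases order_trans)
  qed auto
  with \<sigma> that show ?thesis
    by force
qed


lemma lip_subseq:
  fixes F :: "nat \<Rightarrow> 'a::metric_space \<Rightarrow> real" and Z :: "'a set"
  assumes Z: "compact Z" and lip: "\<And>n x y. \<bar>F n x - F n y\<bar> \<le> dist x y"
    and bd: "\<And>n x. x \<in> Z \<Longrightarrow> \<bar>F n x\<bar> \<le> M"
  shows "\<exists>r. strict_mono r \<and> (\<forall>z\<in>Z. convergent (\<lambda>k. F (r k) z))"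
proof -
  have tb: "\<forall>e>0. \<exists>k. finite k \<and> k \<subseteq> Z \<and> Z \<subseteq> (\<Union>x\<in>k. ball x e)"
    by (rule seq_compact_imp_totally_bounded[OF compact_imp_seq_compact[OF Z]])
  have "\<forall>j::nat. \<exists>k. finite k \<and> k \<subseteq> Z \<and> Z \<subseteq> (\<Union>x\<in>k. ball x (1 / real (Suc j)))"
    using tb by simp
  then obtain T where T: "\<And>j. finite (T j)" "\<And>j. T j \<subseteq> Z"
    "\<And>j. Z \<subseteq> (\<Union>x\<in>T j. ball x (1 / real (Suc j)))"
    by metis
  define R where "R = (\<Union>j. T j)"
  have cR: "countable R" unfolding R_def using T(1) by (simp add: countable_finite)
  have "\<And>n x. x \<in> R \<Longrightarrow> norm (F n x) \<le> M" using bd T(2) unfolding R_def by auto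
  then obtain r where r: "strict_mono (r::nat\<Rightarrow>nat)"
    and conv: "\<And>x. x \<in> R \<Longrightarrow> \<exists>l. (\<lambda>n. F (r n) x) \<longlonglongrightarrow> l"
    using function_convergent_subsequence[OF cR] by metis
  have "convergent (\<lambda>k. F (r k) z)" if zZ: "z \<in> Z" for z
  proof -
    have "Cauchy (\<lambda>k. F (r k) z)"
      unfolding Cauchy_def
    proof (intro allI impI)
      fix e :: real assume "e > 0"
      then have "e/3 > 0" by simp
      then obtain j where j: "inverse (real (Suc j)) < e/3" using reals_Archimedean by blast
      obtain p where p: "p \<in> T j" "dist p z < 1 / real (Suc j)" using T(3)[of j] zZ by auto
      have pR: "p \<in> R" using p(1) unfolding R_def by blast
      have "Cauchy (\<lambda>k. F (r k) p)" using conv[OF pR] convergent_Cauchy convergent_def by blast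
      then obtain N where N: "\<forall>a\<ge>N. \<forall>b\<ge>N. dist (F (r a) p) (F (r b) p) < e/3"
        unfolding Cauchy_def using \<open>e/3>0\<close> by blast
      show "\<exists>N. \<forall>a\<ge>N. \<forall>b\<ge>N. dist (F (r a) z) (F (r b) z) < e"
      proof (intro exI allI impI)
        fix a b assume ab: "a \<ge> N" "b \<ge> N"
        have 1: "\<bar>F (r a) z - F (r a) p\<bar> < e/3"
          using lip[of "r a" z p] p(2) j by (simp add: dist_commute inverse_eq_divide)
        have 2: "\<bar>F (r b) z - F (r b) p\<bar> < e/3"
          using lip[of "r b" z p] p(2) j by (simp add: dist_commute inverse_eq_divide)
        have 3: "\<bar>F (r a) p - F (r b) p\<bar> < e/3" using N ab by (simp add: dist_real_def)
        show "dist (F (r a) z) (F (r b) z) < e"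
          using 1 2 3 unfolding dist_real_def by linarith
      qed
    qed
    then show ?thesis using Cauchy_convergent_iff by blast
  qed
  with r show ?thesis by blast
qed

lemma hausdorff_select:
  fixes Z :: "'a::metric_space set" and A :: "nat \<Rightarrow> 'a set"
  assumes Z: "compact Z" and AZ: "\<And>k. A k \<subseteq> Z" and Ane: "\<And>k. A k \<noteq> {}"
  shows "\<exists>r L. strict_mono (r::nat\<Rightarrow>nat) \<and> KL Z (\<lambda>k. A (r k)) L"
proof -
  obtain M where M: "\<forall>x\<in>Z. \<forall>y\<in>Z. dist x y \<le> M"
    using compact_imp_bounded[OF Z] unfolding bounded_two_points by blast
  define F where "F k z = infdist z (A k)" for k z
  have lip: "\<And>n x y. \<bar>F n x - F n y\<bar> \<le> dist x y" unfolding F_def by (rule infdist_triangle_abs)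
  have bd: "\<bar>F n x\<bar> \<le> M" if xZ: "x \<in> Z" for n x
  proof -
    obtain a where a: "a \<in> A n" using Ane by blast
    then have "infdist x (A n) \<le> dist x a" by (rule infdist_le)
    also have "\<dots> \<le> M" using M xZ a AZ by blast
    finally show "\<bar>F n x\<bar> \<le> M" unfolding F_def using infdist_nonneg[of x "A n"] by simp
  qed
  obtain r where r: "strict_mono r" and cv: "\<forall>z\<in>Z. convergent (\<lambda>k. F (r k) z)"
    using lip_subseq[where F=F and M=M, OF Z lip bd] by blast
  define h where "h z = lim (\<lambda>k. F (r k) z)" for z
  have hl: "(\<lambda>k. F (r k) z) \<longlonglongrightarrow> h z" if "z \<in> Z" for z
    unfolding h_def using cv that convergent_LIMSEQ_iff by blast
  define L where "L = {z\<in>Z. h z = 0}"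
  have "KL Z (\<lambda>k. A (r k)) L"
  proof (rule KL_I)
    show "L \<subseteq> Z" unfolding L_def by blast
    fix l assume "l \<in> L"
    then have "l \<in> Z" "h l = 0" unfolding L_def by auto
    then show "(\<lambda>k. infdist l (A (r k))) \<longlonglongrightarrow> 0" using hl[of l] unfolding F_def by simp
  next
    fix s w z assume s: "strict_mono s" and w: "\<And>k. w k \<in> A (r (s k))" and wz: "w \<longlonglongrightarrow> z"
    have zZ: "z \<in> Z"
    proof -
      have "closed Z" using Z by (rule compact_imp_closed)
      moreover have "\<forall>k. w k \<in> Z" using w AZ by blast
      ultimately show ?thesis using wz unfolding closed_sequential_limits by blast
    qed
    have "((\<lambda>k. F (r k) z) \<circ> s) \<longlonglongrightarrow> h z" using LIMSEQ_subseq_LIMSEQ[OF hl[OF zZ] s] .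
    then have lim1: "(\<lambda>k. F (r (s k)) z) \<longlonglongrightarrow> h z" by (simp add: o_def)
    have wz': "(\<lambda>k. dist (w k) z) \<longlonglongrightarrow> 0" using wz tendsto_dist_iff by blast
    have lim2: "(\<lambda>k. F (r (s k)) z) \<longlonglongrightarrow> 0"
    proof (rule tendsto_sandwich[where f="\<lambda>_. 0" and h="\<lambda>k. dist (w k) z"])
      show "\<forall>\<^sub>F k in sequentially. 0 \<le> F (r (s k)) z" unfolding F_def by (simp add: infdist_nonneg)
      show "\<forall>\<^sub>F k in sequentially. F (r (s k)) z \<le> dist (w k) z"
      proof (rule always_eventually, rule allI)
        fix k
        have "infdist z (A (r (s k))) \<le> dist z (w k)" using w[of k] by (rule infdist_le)
        then show "F (r (s k)) z \<le> dist (w k) z" unfolding F_def by (simp add: dist_commute)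
      qed
      show "(\<lambda>_. 0) \<longlonglongrightarrow> (0::real)" by simp
      show "(\<lambda>k. dist (w k) z) \<longlonglongrightarrow> 0" by (rule wz')
    qed
    have "h z = 0" using LIMSEQ_unique[OF lim1 lim2] .
    then show "z \<in> L" using zZ unfolding L_def by blast
  qed
  with r show ?thesis by blast
qed

lemma compactin_cluster:
  fixes s :: "nat \<Rightarrow> 'x"
  assumes K: "compactin T K" and s: "\<And>k. s k \<in> K"
  shows "\<exists>g\<in>K. \<forall>U. openin T U \<and> g \<in> U \<longrightarrow> (\<forall>N. \<exists>k\<ge>N. s k \<in> U)"
proof (rule ccontr)
  assume "\<not> ?thesis"
  then have "\<forall>g\<in>K. \<exists>U. openin T U \<and> g \<in> U \<and> (\<exists>N. \<forall>k\<ge>N. s k \<notin> U)" by auto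
  then obtain U where U: "\<forall>g\<in>K. openin T (U g) \<and> g \<in> U g \<and> (\<exists>N. \<forall>k\<ge>N. s k \<notin> U g)"
    by (rule bchoice[THEN exE]) blast
  then have "\<forall>g\<in>K. \<exists>N. \<forall>k\<ge>N. s k \<notin> U g" by blast
  then obtain N where N: "\<forall>g\<in>K. \<forall>k\<ge>N g. s k \<notin> U g"
    by (rule bchoice[THEN exE]) blast
  have UN: "\<And>g. g \<in> K \<Longrightarrow> openin T (U g)" "\<And>g. g \<in> K \<Longrightarrow> g \<in> U g"
    "\<And>g k. g \<in> K \<Longrightarrow> k \<ge> N g \<Longrightarrow> s k \<notin> U g"
    using U N by blast+
  have "\<forall>V\<in>U ` K. openin T V" using UN(1) by blast
  moreover have "K \<subseteq> \<Union>(U ` K)" using UN(2) by blast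
  ultimately obtain F where F: "finite F" "F \<subseteq> U ` K" "K \<subseteq> \<Union>F"
    using K unfolding compactin_def by meson
  obtain G where G: "G \<subseteq> K" "finite G" "F = U ` G" using finite_subset_image[OF F(1) F(2)] by blast
  define N0 where "N0 = (\<Sum>g\<in>G. N g)"
  have "s N0 \<in> \<Union>(U ` G)" using s[of N0] F(3) G(3) by blast
  then obtain g where g: "g \<in> G" "s N0 \<in> U g" by blast
  have "N g \<le> N0" unfolding N0_def by (rule member_le_sum[OF g(1) _ G(2)]) simp
  then show False using UN(3)[of g N0] g G(1) by blast
qed

lemma gen_top_finite_Inter:
  assumes "finite P" "generate_topology_on S C" "\<And>p. p \<in> P \<Longrightarrow> generate_topology_on S (B p)"
  shows "generate_topology_on S (C \<inter> \<Inter>(B ` P))"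
  using assms
proof (induction P rule: finite_induct)
  case empty
  then show ?case by simp
next
  case (insert p P)
  have "C \<inter> \<Inter>(B ` insert p P) = B p \<inter> (C \<inter> \<Inter>(B ` P))" by auto
  moreover have "generate_topology_on S (B p \<inter> (C \<inter> \<Inter>(B ` P)))"
    by (rule generate_topology_on.Int) (use insert in auto)
  ultimately show ?case by simp
qed

lemma co_nbhd:
  fixes g :: "'a::metric_space \<Rightarrow> 'c::metric_space"
  assumes g: "g \<in> Cmaps" and Z: "compact Z" and e: "e > 0"
  shows "\<exists>U. openin compact_open_topology U \<and> g \<in> U \<and> (\<forall>h\<in>U. \<forall>z\<in>Z. dist (h z) (g z) < e)"
proof -
  have cg: "continuous_on UNIV g" using g unfolding Cmaps_def by simp
  have "\<forall>z. \<exists>d>0. \<forall>x. dist x z < d \<longrightarrow> dist (g x) (g z) < e/2"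
  proof
    fix z
    have h: "\<forall>e>0. \<exists>d>0. \<forall>x'\<in>UNIV. dist x' z < d \<longrightarrow> dist (g x') (g z) < e"
      using cg unfolding continuous_on_iff by blast
    have "e/2 > 0" using e by simp
    from h[rule_format, OF this] show "\<exists>d>0. \<forall>x. dist x z < d \<longrightarrow> dist (g x) (g z) < e/2" by simp
  qed
  from choice[OF this] obtain d where dd: "\<forall>z. d z > 0 \<and> (\<forall>x. dist x z < d z \<longrightarrow> dist (g x) (g z) < e/2)"
    by blast
  have d: "\<And>z. d z > 0" "\<And>z x. dist x z < d z \<Longrightarrow> dist (g x) (g z) < e/2"
    using dd by blast+
  have "Z \<subseteq> (\<Union>p\<in>Z. ball p (d p / 2))" using d(1) by force
  then obtain P where P: "P \<subseteq> Z" "finite P" "Z \<subseteq> (\<Union>p\<in>P. ball p (d p / 2))"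
    using compactE_image[OF Z, of Z "\<lambda>p. ball p (d p / 2)"] by blast
  define SB :: "('a \<Rightarrow> 'c) set set" where
    "SB = {{g \<in> Cmaps. g ` C \<subseteq> U} | C U. compact C \<and> open U}"
  define B where "B p = {h \<in> Cmaps. h ` (Z \<inter> cball p (d p / 2)) \<subseteq> ball (g p) (e/2)}" for p
  define U where "U = Cmaps \<inter> \<Inter>(B ` P)"
  have "Cmaps \<in> SB" unfolding SB_def
    by (rule CollectI, rule exI[of _ "{}"], rule exI[of _ UNIV]) auto
  then have oC: "generate_topology_on SB Cmaps" by (rule generate_topology_on.Basis)
  have oB: "generate_topology_on SB (B p)" for p
  proof (rule generate_topology_on.Basis)
    have "compact (Z \<inter> cball p (d p / 2))" using Z by (intro compact_Int_closed) auto
    then show "B p \<in> SB" unfolding SB_def B_def by blast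
  qed
  have "generate_topology_on SB U" unfolding U_def
    by (rule gen_top_finite_Inter[OF P(2) oC oB])
  then have oU: "openin compact_open_topology U"
    unfolding compact_open_topology_def SB_def[symmetric] by (simp add: openin_topology_generated_by_iff)
  have gU: "g \<in> U"
  proof -
    have "g \<in> B p" for p
    proof -
      have "g x \<in> ball (g p) (e/2)" if "x \<in> Z \<inter> cball p (d p / 2)" for x
      proof -
        have "dist x p < d p" using that d(1)[of p] by (auto simp: dist_commute)
        then have "dist (g x) (g p) < e/2" by (rule d(2))
        then show ?thesis by (simp add: dist_commute)
      qed
      then show ?thesis unfolding B_def using g by blast
    qed
    then show ?thesis unfolding U_def using g by blast
  qed
  have "\<forall>h\<in>U. \<forall>z\<in>Z. dist (h z) (g z) < e"
  proof (intro ballI)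
    fix h z assume h: "h \<in> U" and z: "z \<in> Z"
    obtain p where p: "p \<in> P" "z \<in> ball p (d p / 2)" using P(3) z by blast
    have "z \<in> Z \<inter> cball p (d p / 2)" using p(2) z by auto
    moreover have "h \<in> B p" using h p(1) unfolding U_def by blast
    moreover have "h ` (Z \<inter> cball p (d p / 2)) \<subseteq> ball (g p) (e/2)" using \<open>h \<in> B p\<close> unfolding B_def by blast
    ultimately have "h z \<in> ball (g p) (e/2)" by blast
    then have 1: "dist (g p) (h z) < e/2" by simp
    have "dist z p < d p" using p(2) d(1)[of p] by (simp add: dist_commute)
    then have 2: "dist (g z) (g p) < e/2" using d(2) by blast
    have "dist (h z) (g z) \<le> dist (h z) (g p) + dist (g z) (g p)" by (rule dist_triangle2)
    then show "dist (h z) (g z) < e" using 1 2 by (simp add: dist_commute)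
  qed
  with oU gU show ?thesis by blast
qed

definition uconv :: "'a set \<Rightarrow> (nat \<Rightarrow> 'a \<Rightarrow> 'c::metric_space) \<Rightarrow> ('a \<Rightarrow> 'c) \<Rightarrow> bool" where
  "uconv Z G g \<longleftrightarrow> (\<forall>e>0. \<exists>N. \<forall>j\<ge>N. \<forall>z\<in>Z. dist (G j z) (g z) < e)"

lemma co_subseq:
  fixes G :: "nat \<Rightarrow> 'a::metric_space \<Rightarrow> 'c::metric_space"
  assumes K: "compactin compact_open_topology K" and KC: "K \<subseteq> Cmaps"
    and G: "\<And>k. G k \<in> K" and Z: "compact Z"
  shows "\<exists>g\<in>K. \<exists>r. strict_mono r \<and> uconv Z (\<lambda>j. G (r j)) g"
proof -
  have "\<exists>g\<in>K. \<forall>U. openin compact_open_topology U \<and> g \<in> U \<longrightarrow> (\<forall>N. \<exists>k\<ge>N. G k \<in> U)"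
    by (rule compactin_cluster[OF K G])
  then obtain g where gK: "g \<in> K" and cl: "\<forall>U. openin compact_open_topology U \<and> g \<in> U \<longrightarrow> (\<forall>N. \<exists>k\<ge>N. G k \<in> U)"
    by (elim bexE) (rule that; assumption)
  have gC: "g \<in> Cmaps" using gK KC by blast
  have "\<forall>j::nat. \<exists>U. openin compact_open_topology U \<and> g \<in> U \<and> (\<forall>h\<in>U. \<forall>z\<in>Z. dist (h z) (g z) < 1 / real (Suc j))"
  proof
    fix j :: nat
    have "1 / real (Suc j) > 0" by simp
    from co_nbhd[OF gC Z this]
    show "\<exists>U. openin compact_open_topology U \<and> g \<in> U \<and> (\<forall>h\<in>U. \<forall>z\<in>Z. dist (h z) (g z) < 1 / real (Suc j))" .
  qed
  from choice[OF this] obtain U where UU: "\<forall>j. openin compact_open_topology (U j) \<and> g \<in> U j \<and> (\<forall>h\<in>U j. \<forall>z\<in>Z. dist (h z) (g z) < 1 / real (Suc j))"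
    by (elim exE) (rule that; assumption)
  have U1: "openin compact_open_topology (U j)" for j using UU by simp
  have U2: "g \<in> U j" for j using UU by simp
  have U3: "dist (h z) (g z) < 1 / real (Suc j)" if "h \<in> U j" "z \<in> Z" for j h z
  proof -
    have "\<forall>h\<in>U j. \<forall>z\<in>Z. dist (h z) (g z) < 1 / real (Suc j)" using UU by simp
    then show ?thesis using that by simp
  qed
  note U = U1 U2 U3
  have "\<exists>k\<ge>N. G k \<in> U j" for j N
  proof -
    have "openin compact_open_topology (U j) \<and> g \<in> U j \<longrightarrow> (\<forall>N. \<exists>k\<ge>N. G k \<in> U j)"
      using cl by (rule allE)
    then show ?thesis using U(1,2) by blast
  qed
  then have "\<exists>r::nat\<Rightarrow>nat. strict_mono r \<and> (\<forall>j. G (r j) \<in> U j)"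
    by (rule subseq_choice)
  then obtain r :: "nat \<Rightarrow> nat" where r: "strict_mono r" "\<And>j. G (r j) \<in> U j" by blast
  have "uconv Z (\<lambda>j. G (r j)) g" unfolding uconv_def
  proof (intro allI impI)
    fix e :: real assume "e > 0"
    then obtain N where N: "inverse (real (Suc N)) < e" using reals_Archimedean by blast
    show "\<exists>N. \<forall>j\<ge>N. \<forall>z\<in>Z. dist (G (r j) z) (g z) < e"
    proof (intro exI allI impI ballI)
      fix j z assume "j \<ge> N" "z \<in> Z"
      have "dist (G (r j) z) (g z) < 1 / real (Suc j)" using U(3)[OF r(2) \<open>z\<in>Z\<close>] .
      also have "\<dots> \<le> 1 / real (Suc N)" using \<open>j\<ge>N\<close> by (intro divide_left_mono) auto
      also have "\<dots> < e" using N by (simp add: inverse_eq_divide)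
      finally show "dist (G (r j) z) (g z) < e" .
    qed
  qed
  with gK r show ?thesis by blast
qed

lemma uconv_subseq:
  assumes "uconv Z G g" "strict_mono s"
  shows "uconv Z (\<lambda>j. G (s j)) g"
  unfolding uconv_def
proof (intro allI impI)
  fix e :: real assume "e > 0"
  then obtain N where N: "\<forall>j\<ge>N. \<forall>z\<in>Z. dist (G j z) (g z) < e" using assms(1) unfolding uconv_def by blast
  show "\<exists>N. \<forall>j\<ge>N. \<forall>z\<in>Z. dist (G (s j) z) (g z) < e"
  proof (intro exI allI impI)
    fix j assume "j \<ge> N"
    then have "s j \<ge> N" using seq_suble[OF assms(2), of j] by linarith
    then show "\<forall>z\<in>Z. dist (G (s j) z) (g z) < e" using N by blast
  qed
qed

lemma uconv_point:
  fixes G :: "nat \<Rightarrow> 'a::metric_space \<Rightarrow> 'c::metric_space"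
  assumes U: "uconv Z G g" and cg: "continuous_on UNIV g" and w: "\<And>k. w k \<in> Z" and wc: "w \<longlonglongrightarrow> c"
  shows "(\<lambda>k. G k (w k)) \<longlonglongrightarrow> g c"
proof -
  have "isCont g c" using cg continuous_on_eq_continuous_at[of UNIV g] by simp
  from isCont_tendsto_compose[OF this wc] have gw: "(\<lambda>k. g (w k)) \<longlonglongrightarrow> g c" .
  show ?thesis unfolding lim_sequentially
  proof (intro allI impI)
    fix e :: real assume "e > 0"
    then have e2: "e/2 > 0" by simp
    obtain N1 where N1: "\<forall>j\<ge>N1. \<forall>z\<in>Z. dist (G j z) (g z) < e/2" using U e2 unfolding uconv_def by blast
    obtain N2 where N2: "\<forall>j\<ge>N2. dist (g (w j)) (g c) < e/2" using gw e2 unfolding lim_sequentially by blast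
    show "\<exists>N. \<forall>k\<ge>N. dist (G k (w k)) (g c) < e"
    proof (intro exI allI impI)
      fix k assume "k \<ge> max N1 N2"
      then have "dist (G k (w k)) (g (w k)) < e/2" "dist (g (w k)) (g c) < e/2"
        using N1 N2 w by auto
      moreover have "dist (G k (w k)) (g c) \<le> dist (G k (w k)) (g (w k)) + dist (g (w k)) (g c)"
        by (rule dist_triangle)
      ultimately show "dist (G k (w k)) (g c) < e" by linarith
    qed
  qed
qed

lemma core1:
  fixes f :: "'a::metric_space \<Rightarrow> 'b::metric_space" and G :: "nat \<Rightarrow> 'a \<Rightarrow> 'c::metric_space"
    and y :: "nat \<Rightarrow> 'b" and LL :: "nat \<Rightarrow> 'a set"
  assumes Z: "compact Z" and fc: "continuous_on UNIV f" and yc: "y \<longlonglongrightarrow> y0"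
    and U: "uconv Z G g" and gc: "continuous_on UNIV g" and Gc: "\<And>k. continuous_on UNIV (G k)"
    and KL: "KL Z LL L" and LLc: "\<And>k. continuum (LL k)" and LLf: "\<And>k. LL k \<subseteq> f -` {y k}"
    and FZ: "\<And>k. f -` {y k} \<subseteq> Z"
    and diam: "\<And>k. diameter (G k ` LL k) \<ge> 1 / real n"
  shows "continuum L \<and> L \<subseteq> f -` {y0} \<and> diameter (g ` L) \<ge> 1 / real n"
proof -
  have LLZ: "LL k \<subseteq> Z" for k using LLf[of k] FZ[of k] by blast
  have LLne: "LL k \<noteq> {}" for k using LLc[of k] unfolding continuum_def by blast
  have LLcp: "compact (LL k)" for k using LLc[of k] unfolding continuum_def by blast
  have LLcn: "connected (LL k)" for k using LLc[of k] unfolding continuum_def by blast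
  have Lcl: "closed L" by (rule KL_closed[OF KL LLne])
  have LZ: "L \<subseteq> Z" by (rule KL_D1[OF KL])
  have Lcp: "compact L"
  proof -
    have "compact (Z \<inter> L)" using Z Lcl by (rule compact_Int_closed)
    moreover have "Z \<inter> L = L" using LZ by blast
    ultimately show ?thesis by simp
  qed
  have Lcn: "connected L" by (rule KL_connected[OF KL Z LLZ LLne LLcn])
  have isf: "isCont f c" for c using fc continuous_on_eq_continuous_at[of UNIV f] by simp
  have Lf: "L \<subseteq> f -` {y0}"
  proof
    fix l assume l: "l \<in> L"
    obtain w where w: "\<And>k. w k \<in> LL k" "w \<longlonglongrightarrow> l"
      using pick_close[OF KL_D2[OF KL l] LLne] by blast
    have "(\<lambda>k. f (w k)) \<longlonglongrightarrow> f l" by (rule isCont_tendsto_compose[OF isf w(2)])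
    moreover have "(\<lambda>k. f (w k)) = y" using w(1) LLf by (auto intro!: ext)
    ultimately have "y \<longlonglongrightarrow> f l" by simp
    then have "f l = y0" using yc LIMSEQ_unique by blast
    then show "l \<in> f -` {y0}" by simp
  qed
  have ex: "\<exists>a b. a \<in> LL k \<and> b \<in> LL k \<and> dist (G k a) (G k b) \<ge> 1 / real n" for k
  proof -
    have "compact (G k ` LL k)"
      by (rule compact_continuous_image[OF continuous_on_subset[OF Gc subset_UNIV] LLcp])
    moreover have "G k ` LL k \<noteq> {}" using LLne[of k] by blast
    ultimately have "\<exists>u\<in>G k ` LL k. \<exists>v\<in>G k ` LL k. dist u v = diameter (G k ` LL k)"
      by (rule diameter_compact_attained)
    then obtain u v where uv: "u \<in> G k ` LL k" "v \<in> G k ` LL k" "dist u v = diameter (G k ` LL k)"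
      by (elim bexE) (rule that; assumption)
    from uv(1) obtain a where a: "a \<in> LL k" "u = G k a" by (rule imageE) (rule that; assumption)
    from uv(2) obtain b where b: "b \<in> LL k" "v = G k b" by (rule imageE) (rule that; assumption)
    have "dist (G k a) (G k b) \<ge> 1 / real n" using uv(3) diam[of k] a(2) b(2) by simp
    with a(1) b(1) show ?thesis by blast
  qed
  have "\<forall>k. \<exists>a. \<exists>b. a \<in> LL k \<and> b \<in> LL k \<and> dist (G k a) (G k b) \<ge> 1 / real n"
    using ex by blast
  from choice[OF this] obtain a where "\<forall>k. \<exists>b. a k \<in> LL k \<and> b \<in> LL k \<and> dist (G k (a k)) (G k b) \<ge> 1 / real n"
    by (elim exE) (rule that; assumption)
  from choice[OF this] obtain b where p: "\<forall>k. a k \<in> LL k \<and> b k \<in> LL k \<and> dist (G k (a k)) (G k (b k)) \<ge> 1 / real n"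
    by (elim exE) (rule that; assumption)
  have ab: "a k \<in> LL k" "b k \<in> LL k" "dist (G k (a k)) (G k (b k)) \<ge> 1 / real n" for k
    using p by auto
  have aZ: "a k \<in> Z" for k using ab(1) LLZ by blast
  have bZ': "b k \<in> Z" for k using ab(2) LLZ by blast
  obtain s1 la where s1: "strict_mono s1" "la \<in> Z" "(a \<circ> s1) \<longlonglongrightarrow> la"
    using cpt_subseq[of Z a, OF Z aZ] by (elim exE conjE) (rule that; assumption)
  have bZ: "(b \<circ> s1) k \<in> Z" for k using bZ' by simp
  obtain s2 lb where s2: "strict_mono s2" "lb \<in> Z" "((b \<circ> s1) \<circ> s2) \<longlonglongrightarrow> lb"
    using cpt_subseq[of Z "b \<circ> s1", OF Z bZ] by (elim exE conjE) (rule that; assumption)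
  define \<sigma> where "\<sigma> = s1 \<circ> s2"
  have sm: "strict_mono \<sigma>" unfolding \<sigma>_def using s1(1) s2(1) by (rule strict_mono_o)
  have alim: "(\<lambda>k. a (\<sigma> k)) \<longlonglongrightarrow> la"
    using LIMSEQ_subseq_LIMSEQ[OF s1(3) s2(1)] unfolding \<sigma>_def by (simp add: o_def)
  have blim: "(\<lambda>k. b (\<sigma> k)) \<longlonglongrightarrow> lb"
    using s2(3) unfolding \<sigma>_def by (simp add: o_def)
  have laL: "la \<in> L" by (rule KL_D3[OF KL sm _ alim]) (rule ab(1))
  have lbL: "lb \<in> L" by (rule KL_D3[OF KL sm _ blim]) (rule ab(2))
  have U': "uconv Z (\<lambda>k. G (\<sigma> k)) g" by (rule uconv_subseq[OF U sm])
  have ga: "(\<lambda>k. G (\<sigma> k) (a (\<sigma> k))) \<longlonglongrightarrow> g la" by (rule uconv_point[OF U' gc _ alim]) (rule aZ)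
  have gb: "(\<lambda>k. G (\<sigma> k) (b (\<sigma> k))) \<longlonglongrightarrow> g lb" by (rule uconv_point[OF U' gc _ blim]) (rule bZ')
  have "(\<lambda>k. dist (G (\<sigma> k) (a (\<sigma> k))) (G (\<sigma> k) (b (\<sigma> k)))) \<longlonglongrightarrow> dist (g la) (g lb)"
    by (rule tendsto_dist[OF ga gb])
  moreover have "\<exists>N. \<forall>k\<ge>N. 1 / real n \<le> dist (G (\<sigma> k) (a (\<sigma> k))) (G (\<sigma> k) (b (\<sigma> k)))"
    using ab(3) by blast
  ultimately have dl: "1 / real n \<le> dist (g la) (g lb)" by (rule LIMSEQ_le_const)
  have "compact (g ` L)" by (rule compact_continuous_image[OF continuous_on_subset[OF gc subset_UNIV] Lcp])
  then have "bounded (g ` L)" by (rule compact_imp_bounded)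
  then have "dist (g la) (g lb) \<le> diameter (g ` L)"
    by (rule diameter_bounded_bound) (use laL lbL in auto)
  with dl have "diameter (g ` L) \<ge> 1 / real n" by linarith
  moreover have "continuum L" unfolding continuum_def using laL Lcp Lcn by blast
  ultimately show ?thesis using Lf by blast
qed

lemma core2:
  fixes f :: "'a::metric_space \<Rightarrow> 'b::metric_space" and G :: "nat \<Rightarrow> 'a \<Rightarrow> 'c::metric_space"
    and y :: "nat \<Rightarrow> 'b" and LL :: "nat \<Rightarrow> 'a set"
  assumes Z: "compact Z" and fc: "continuous_on UNIV f" and yc: "y \<longlonglongrightarrow> y0"
    and U: "uconv Z G g" and gc: "continuous_on UNIV g"
    and KL: "KL Z LL L" and LLc: "\<And>k. continuum (LL k)" and LLf: "\<And>k. LL k \<subseteq> f -` {y k}"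
    and FZ: "\<And>k. f -` {y k} \<subseteq> Z"
    and bad: "\<And>k x. x \<in> LL k \<Longrightarrow> \<not> Ccomp x (G k) f (y k) \<subseteq> Bset (LL k) \<delta>"
    and xL: "x \<in> L" and good: "Ccomp x g f y0 \<subseteq> Bset L \<delta>"
  shows False
proof -
  have LLne: "LL k \<noteq> {}" for k using LLc[of k] unfolding continuum_def by blast
  have isf: "isCont f c" for c using fc continuous_on_eq_continuous_at[of UNIV f] by simp
  have "\<exists>w. (\<forall>k. w k \<in> LL k) \<and> w \<longlonglongrightarrow> x" by (rule pick_close[OF KL_D2[OF KL xL] LLne])
  then obtain xs where xs: "\<forall>k. xs k \<in> LL k" "xs \<longlonglongrightarrow> x" by (elim exE conjE) (rule that; assumption)
  define CC where "CC k = Ccomp (xs k) (G k) f (y k)" for k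
  have xsf: "xs k \<in> f -` {y k}" for k using xs(1) LLf by blast
  have CCsub: "CC k \<subseteq> G k -` {G k (xs k)} \<inter> f -` {y k}" for k
    unfolding CC_def Ccomp_def by (rule connected_component_subset)
  have CCZ: "CC k \<subseteq> Z" for k using CCsub[of k] FZ[of k] by blast
  have xsC: "xs k \<in> CC k" for k
    unfolding CC_def Ccomp_def using xsf[of k] by (simp add: connected_component_refl)
  have CCne: "CC k \<noteq> {}" for k using xsC[of k] by blast
  have CCcn: "connected (CC k)" for k unfolding CC_def Ccomp_def by simp
  have "\<exists>r C. strict_mono (r::nat\<Rightarrow>nat) \<and> KL Z (\<lambda>k. CC (r k)) C"
    by (rule hausdorff_select[OF Z CCZ CCne])
  then obtain s3 C where s3: "strict_mono s3" and KLC: "KL Z (\<lambda>k. CC (s3 k)) C"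
    by (elim exE conjE) (rule that; assumption)
  have Ccn: "connected C"
    by (rule KL_connected[OF KLC Z]) (use CCZ CCne CCcn in auto)
  have sid: "strict_mono (\<lambda>k::nat. k)" by (simp add: strict_mono_def)
  have xs3: "(\<lambda>k. xs (s3 k)) \<longlonglongrightarrow> x" using LIMSEQ_subseq_LIMSEQ[OF xs(2) s3] by (simp add: o_def)
  have xC: "x \<in> C" by (rule KL_D3[OF KLC sid _ xs3]) (rule xsC)
  have U3: "uconv Z (\<lambda>k. G (s3 k)) g" by (rule uconv_subseq[OF U s3])
  have y3: "(\<lambda>k. y (s3 k)) \<longlonglongrightarrow> y0" using LIMSEQ_subseq_LIMSEQ[OF yc s3] by (simp add: o_def)
  have xsZ: "xs (s3 k) \<in> Z" for k using xsC CCZ by blast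
  have gxs: "(\<lambda>k. G (s3 k) (xs (s3 k))) \<longlonglongrightarrow> g x" by (rule uconv_point[OF U3 gc _ xs3]) (rule xsZ)
  have CS: "C \<subseteq> g -` {g x} \<inter> f -` {y0}"
  proof
    fix c assume c: "c \<in> C"
    have "\<exists>w. (\<forall>k. w k \<in> CC (s3 k)) \<and> w \<longlonglongrightarrow> c" by (rule pick_close[OF KL_D2[OF KLC c] CCne])
    then obtain w where w: "\<forall>k. w k \<in> CC (s3 k)" "w \<longlonglongrightarrow> c" by (elim exE conjE) (rule that; assumption)
    have wsub: "w k \<in> G (s3 k) -` {G (s3 k) (xs (s3 k))} \<inter> f -` {y (s3 k)}" for k
      using w(1) CCsub by blast
    have "(\<lambda>k. f (w k)) \<longlonglongrightarrow> f c" by (rule isCont_tendsto_compose[OF isf w(2)])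
    moreover have "(\<lambda>k. f (w k)) = (\<lambda>k. y (s3 k))" using wsub by (auto intro!: ext)
    ultimately have "(\<lambda>k. y (s3 k)) \<longlonglongrightarrow> f c" by simp
    then have fc0: "f c = y0" using y3 by (rule LIMSEQ_unique)
    have wZ: "w k \<in> Z" for k using w(1) CCZ by blast
    have "(\<lambda>k. G (s3 k) (w k)) \<longlonglongrightarrow> g c" by (rule uconv_point[OF U3 gc _ w(2)]) (rule wZ)
    moreover have "(\<lambda>k. G (s3 k) (w k)) = (\<lambda>k. G (s3 k) (xs (s3 k)))" using wsub by (auto intro!: ext)
    ultimately have "(\<lambda>k. G (s3 k) (xs (s3 k))) \<longlonglongrightarrow> g c" by simp
    then have "g c = g x" using gxs by (rule LIMSEQ_unique)
    with fc0 show "c \<in> g -` {g x} \<inter> f -` {y0}" by simp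
  qed
  have CsubComp: "C \<subseteq> Ccomp x g f y0"
    unfolding Ccomp_def by (rule connected_component_maximal[OF xC Ccn CS])
  have "\<exists>z. z \<in> CC k \<and> z \<notin> Bset (LL k) \<delta>" for k
    using bad[OF xs(1)[rule_format, of k]] unfolding CC_def by blast
  then have "\<forall>k. \<exists>z. z \<in> CC k \<and> z \<notin> Bset (LL k) \<delta>" by blast
  from choice[OF this] obtain zz where zz: "\<forall>k. zz k \<in> CC k \<and> zz k \<notin> Bset (LL k) \<delta>"
    by (elim exE) (rule that; assumption)
  have zzZ: "zz (s3 k) \<in> Z" for k using zz CCZ by blast
  have "\<exists>r l. strict_mono r \<and> l \<in> Z \<and> ((\<lambda>k. zz (s3 k)) \<circ> r) \<longlonglongrightarrow> l"
    by (rule cpt_subseq[of Z "\<lambda>k. zz (s3 k)", OF Z zzZ])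
  then obtain s4 z where s4: "strict_mono s4" "z \<in> Z" "((\<lambda>k. zz (s3 k)) \<circ> s4) \<longlonglongrightarrow> z"
    by (elim exE conjE) (rule that; assumption)
  have zlim: "(\<lambda>j. zz (s3 (s4 j))) \<longlonglongrightarrow> z" using s4(3) by (simp add: o_def)
  have KLC4: "KL Z (\<lambda>j. CC (s3 (s4 j))) C" using KL_subseq[OF KLC s4(1)] by simp
  have zC: "z \<in> C" by (rule KL_D3[OF KLC4 sid _ zlim]) (use zz in blast)
  have zB: "z \<in> Bset L \<delta>" using zC CsubComp good by blast
  then have zlt: "infdist z L < \<delta>" unfolding Bset_def by simp
  define \<sigma> where "\<sigma> j = s3 (s4 j)" for j
  have sm: "strict_mono \<sigma>" unfolding \<sigma>_def using strict_mono_o[OF s3 s4(1)] by (simp add: o_def)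
  have ge: "\<delta> \<le> dist z l" if lL: "l \<in> L" for l
  proof -
    have "((\<lambda>k. infdist l (LL k)) \<circ> \<sigma>) \<longlonglongrightarrow> 0" by (rule LIMSEQ_subseq_LIMSEQ[OF KL_D2[OF KL lL] sm])
    then have i0: "(\<lambda>j. infdist l (LL (\<sigma> j))) \<longlonglongrightarrow> 0" by (simp add: o_def)
    have d0: "(\<lambda>j. dist (zz (\<sigma> j)) l) \<longlonglongrightarrow> dist z l"
      by (rule tendsto_dist[OF zlim[folded \<sigma>_def]]) simp
    have "(\<lambda>j. infdist l (LL (\<sigma> j)) + dist (zz (\<sigma> j)) l) \<longlonglongrightarrow> 0 + dist z l"
      by (rule tendsto_add[OF i0 d0])
    moreover have "\<exists>N. \<forall>j\<ge>N. \<delta> \<le> infdist l (LL (\<sigma> j)) + dist (zz (\<sigma> j)) l"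
    proof (intro exI allI impI)
      fix j :: nat
      have "\<delta> \<le> infdist (zz (\<sigma> j)) (LL (\<sigma> j))" using zz unfolding Bset_def by (simp add: not_less)
      also have "\<dots> \<le> infdist l (LL (\<sigma> j)) + dist (zz (\<sigma> j)) l" by (rule infdist_triangle)
      finally show "\<delta> \<le> infdist l (LL (\<sigma> j)) + dist (zz (\<sigma> j)) l" .
    qed
    ultimately have "\<delta> \<le> 0 + dist z l" by (rule LIMSEQ_le_const)
    then show ?thesis by simp
  qed
  have Lne: "L \<noteq> {}" using xL by blast
  have "\<delta> \<le> infdist z L"
    unfolding infdist_notempty[OF Lne] by (rule cINF_greatest[OF Lne ge])
  with zlt show False by simp
qed

theorem lemma2p5:
  fixes f :: "'a::metric_space \<Rightarrow> 'b::metric_space"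
    and g0 :: "'a \<Rightarrow> 'c::complete_space"
    and eps :: "'a \<Rightarrow> real"
    and m n :: nat
    and y0 :: 'b
    and K :: "('a \<Rightarrow> 'c) set"
  assumes "perfect_map f"
    and "m \<ge> 1" and "n \<ge> 1"
    and "g0 \<in> Cmaps"
    and "continuous_on UNIV eps" and "\<And>x. 0 < eps x \<and> eps x \<le> 1/64"
    and "compactin compact_open_topology K"
    and "K \<subseteq> Kset f m n y0 \<inter> Bfun g0 eps"
  shows "\<exists>V. open V \<and> y0 \<in> V \<and> (\<forall>y\<in>V. K \<subseteq> Kset f m n y \<inter> Bfun g0 eps)"
proof (rule ccontr)
  assume nV: "\<not> ?thesis"
  note pf = assms(1) and Kc = assms(7) and Ksub = assms(8)
  have fc: "continuous_on UNIV f" using pf unfolding perfect_map_def by blast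
  have KB: "K \<subseteq> Bfun g0 eps" using Ksub by blast
  have KC: "K \<subseteq> Cmaps" using Ksub unfolding Kset_def by blast
  have "\<exists>yk. dist yk y0 < 1 / real (Suc k) \<and> \<not> K \<subseteq> Kset f m n yk \<inter> Bfun g0 eps" for k
  proof (rule ccontr)
    assume "\<not> ?thesis"
    then have "\<forall>yk\<in>ball y0 (1 / real (Suc k)). K \<subseteq> Kset f m n yk \<inter> Bfun g0 eps"
      by (auto simp: dist_commute)
    moreover have "y0 \<in> ball y0 (1 / real (Suc k))" by simp
    moreover have "open (ball y0 (1 / real (Suc k)))" by simp
    ultimately show False using nV by blast
  qed
  then have "\<forall>k. \<exists>yk. dist yk y0 < 1 / real (Suc k) \<and> \<not> K \<subseteq> Kset f m n yk \<inter> Bfun g0 eps" by blast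
  from choice[OF this] obtain y where y: "\<forall>k. dist (y k) y0 < 1 / real (Suc k) \<and> \<not> K \<subseteq> Kset f m n (y k) \<inter> Bfun g0 eps"
    by (elim exE) (rule that; assumption)
  have yc: "y \<longlonglongrightarrow> y0"
  proof -
    have "(\<lambda>k. dist (y k) y0) \<longlonglongrightarrow> 0"
    proof (rule tendsto_sandwich[where f="\<lambda>_. 0" and h="\<lambda>k. 1 / real (Suc k)"])
      show "\<forall>\<^sub>F k in sequentially. 0 \<le> dist (y k) y0" by simp
      show "\<forall>\<^sub>F k in sequentially. dist (y k) y0 \<le> 1 / real (Suc k)"
        using y by (simp add: less_imp_le)
      show "(\<lambda>_. 0) \<longlonglongrightarrow> (0::real)" by simp
      show "(\<lambda>k. 1 / real (Suc k)) \<longlonglongrightarrow> 0" using LIMSEQ_inverse_real_of_nat by (simp add: inverse_eq_divide)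
    qed
    then show ?thesis using tendsto_dist_iff by blast
  qed
  have "\<exists>G. G \<in> K \<and> (\<exists>L. continuum L \<and> L \<subseteq> f -` {y k} \<and> diameter (G ` L) \<ge> 1 / real n \<and>
          (\<forall>x\<in>L. \<not> Ccomp x G f (y k) \<subseteq> Bset L (1 / real m)))" for k
  proof -
    have "\<not> K \<subseteq> Kset f m n (y k) \<inter> Bfun g0 eps" using y by blast
    then obtain G where G: "G \<in> K" "G \<notin> Kset f m n (y k)" using KB by blast
    have "G \<in> Cmaps" using G(1) KC by blast
    then have "\<exists>L. continuum L \<and> L \<subseteq> f -` {y k} \<and> diameter (G ` L) \<ge> 1 / real n \<and>
          (\<forall>x\<in>L. \<not> Ccomp x G f (y k) \<subseteq> Bset L (1 / real m))"
      using G(2) unfolding Kset_def by blast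
    with G(1) show ?thesis by blast
  qed
  then have "\<forall>k. \<exists>G. G \<in> K \<and> (\<exists>L. continuum L \<and> L \<subseteq> f -` {y k} \<and> diameter (G ` L) \<ge> 1 / real n \<and>
          (\<forall>x\<in>L. \<not> Ccomp x G f (y k) \<subseteq> Bset L (1 / real m)))" by blast
  from choice[OF this] obtain G where G: "\<forall>k. G k \<in> K \<and> (\<exists>L. continuum L \<and> L \<subseteq> f -` {y k} \<and> diameter (G k ` L) \<ge> 1 / real n \<and>
          (\<forall>x\<in>L. \<not> Ccomp x (G k) f (y k) \<subseteq> Bset L (1 / real m)))"
    by (elim exE) (rule that; assumption)
  then have "\<forall>k. \<exists>L. continuum L \<and> L \<subseteq> f -` {y k} \<and> diameter (G k ` L) \<ge> 1 / real n \<and>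
          (\<forall>x\<in>L. \<not> Ccomp x (G k) f (y k) \<subseteq> Bset L (1 / real m))" by blast
  from choice[OF this] obtain LL where LL: "\<forall>k. continuum (LL k) \<and> LL k \<subseteq> f -` {y k} \<and> diameter (G k ` LL k) \<ge> 1 / real n \<and>
          (\<forall>x\<in>LL k. \<not> Ccomp x (G k) f (y k) \<subseteq> Bset (LL k) (1 / real m))"
    by (elim exE) (rule that; assumption)
  have GK: "G k \<in> K" for k using G by blast
  have LLc: "continuum (LL k)" for k using LL by blast
  have LLf: "LL k \<subseteq> f -` {y k}" for k using LL by blast
  have LLd: "diameter (G k ` LL k) \<ge> 1 / real n" for k using LL by blast
  have LLbad: "\<not> Ccomp x (G k) f (y k) \<subseteq> Bset (LL k) (1 / real m)" if "x \<in> LL k" for k x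
    using LL that by blast
  define Z where "Z = f -` insert y0 (range y)"
  have Z: "compact Z" unfolding Z_def by (rule perfect_preimage_compact[OF pf yc])
  have FZ: "f -` {y k} \<subseteq> Z" for k unfolding Z_def by auto
  have LLne: "LL k \<noteq> {}" for k using LLc[of k] unfolding continuum_def by blast
  have LLZ: "LL k \<subseteq> Z" for k using LLf[of k] FZ[of k] by blast
  have "\<exists>g\<in>K. \<exists>r. strict_mono r \<and> uconv Z (\<lambda>j. G (r j)) g"
    by (rule co_subseq[OF Kc KC GK Z])
  then obtain g r1 where gK: "g \<in> K" and r1: "strict_mono r1" and U1: "uconv Z (\<lambda>j. G (r1 j)) g"
    by (elim bexE exE conjE) (rule that; assumption)
  have "\<exists>r L. strict_mono (r::nat\<Rightarrow>nat) \<and> KL Z (\<lambda>k. LL (r1 (r k))) L"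
    by (rule hausdorff_select[OF Z]) (use LLZ LLne in auto)
  then obtain r2 L where r2: "strict_mono r2" and KL: "KL Z (\<lambda>k. LL (r1 (r2 k))) L"
    by (elim exE conjE) (rule that; assumption)
  define \<sigma> where "\<sigma> k = r1 (r2 k)" for k
  have sm: "strict_mono \<sigma>" unfolding \<sigma>_def using strict_mono_o[OF r1 r2] by (simp add: o_def)
  have U: "uconv Z (\<lambda>k. G (\<sigma> k)) g" unfolding \<sigma>_def using uconv_subseq[OF U1 r2] by simp
  have KL': "KL Z (\<lambda>k. LL (\<sigma> k)) L" using KL unfolding \<sigma>_def by simp
  have ys: "(\<lambda>k. y (\<sigma> k)) \<longlonglongrightarrow> y0" using LIMSEQ_subseq_LIMSEQ[OF yc sm] by (simp add: o_def)
  have gc: "continuous_on UNIV g" using gK KC unfolding Cmaps_def by blast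
  have Gc: "continuous_on UNIV (G (\<sigma> k))" for k using GK KC unfolding Cmaps_def by blast
  have c1: "continuum L \<and> L \<subseteq> f -` {y0} \<and> diameter (g ` L) \<ge> 1 / real n"
    by (rule core1[OF Z fc ys U gc Gc KL' LLc LLf FZ LLd])
  have "g \<in> Kset f m n y0" using gK Ksub by blast
  then have "\<exists>x\<in>L. Ccomp x g f y0 \<subseteq> Bset L (1 / real m)"
    using c1 unfolding Kset_def by blast
  then obtain x where xL: "x \<in> L" and good: "Ccomp x g f y0 \<subseteq> Bset L (1 / real m)"
    by (elim bexE) (rule that; assumption)
  show False
    by (rule core2[OF Z fc ys U gc KL' LLc LLf FZ LLbad xL good])
qed

end
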